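(* Let $M$ be a loopless matroid of rank $d+1$, and let $\{F_1,\dots,F_d\}$ and $\{G_1,\dots,G_d\}$ be multisets of flats of $M$ of rank at least $2$ such that both $t_{F_1}\cdots t_{F_d}$ and $t_{G_1}\cdots t_{G_d}$ lie in the support of $VP^\nabla_M$. If $G_d$ appears more times in $\{G_1,\dots,G_d\}$ than in $\{F_1,\dots,F_d\}$, then there exists a flat $F_m$ appearing more times in $\{F_1,\dots,F_d\}$ than in $\{G_1,\dots,G_d\}$ such that $t_{F_1}\cdots t_{F_d}t_{G_d}/t_{F_m}$ lies in the support of $VP^\nabla_M$.
   Context: $VP^\nabla_M(\underline t)=\sum_{(F_1,\dots,F_d)}t_{F_1}\cdots t_{F_d}$, the sum over ordered $d$-tuples of nonempty flats satisfying $\operatorname{rk}_M(\bigcup_{j\in J}F_j)\ge|J|+1$ for all nonempty $J\subseteq\{1,\dots,d\}$ (this is the volume polynomial $\int_M(\sum_F t_Fh_F)^d$ of the Chow ring of $M$ in its simplicial generators). Hence a monomial $t_{F_1}\cdots t_{F_d}$ lies in the support of $VP^\nabla_M$ if and only if the multiset $\{F_1,\dots,F_d\}$ satisfies this rank condition. *)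

theory Defs
  imports Main "HOL-Library.Multiset"
begin

definition matroid :: "'a set \<Rightarrow> ('a set \<Rightarrow> bool) \<Rightarrow> bool" where
  "matroid E indep \<longleftrightarrow> finite E \<and> (\<forall>X. indep X \<longrightarrow> X \<subseteq> E) \<and> indep {} \<and>
     (\<forall>X Y. indep X \<and> Y \<subseteq> X \<longrightarrow> indep Y) \<and>
     (\<forall>X Y. indep X \<and> indep Y \<and> card X < card Y \<longrightarrow> (\<exists>y\<in>Y - X. indep (insert y X)))"

definition mrank :: "('a set \<Rightarrow> bool) \<Rightarrow> 'a set \<Rightarrow> nat" where
  "mrank indep X = Max {card I | I. I \<subseteq> X \<and> indep I}"

definition loopless :: "'a set \<Rightarrow> ('a set \<Rightarrow> bool) \<Rightarrow> bool" where
  "loopless E indep \<longleftrightarrow> (\<forall>x\<in>E. indep {x})"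

definition is_flat :: "'a set \<Rightarrow> ('a set \<Rightarrow> bool) \<Rightarrow> 'a set \<Rightarrow> bool" where
  "is_flat E indep F \<longleftrightarrow> F \<subseteq> E \<and> (\<forall>x\<in>E - F. mrank indep (insert x F) > mrank indep F)"

text \<open>Ordered d-tuples (indexed by 1..d) of nonempty flats satisfying the rank condition:
  these index the terms of the volume polynomial.\<close>
definition admissible_tuple :: "'a set \<Rightarrow> ('a set \<Rightarrow> bool) \<Rightarrow> nat \<Rightarrow> (nat \<Rightarrow> 'a set) \<Rightarrow> bool" where
  "admissible_tuple E indep d F \<longleftrightarrow>
     (\<forall>j\<in>{1..d}. is_flat E indep (F j) \<and> F j \<noteq> {}) \<and>
     (\<forall>J. J \<subseteq> {1..d} \<and> J \<noteq> {} \<longrightarrow> mrank indep (\<Union>(F ` J)) \<ge> card J + 1)"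

text \<open>The multiset of flats of a tuple (i.e. the monomial t_{F_1}...t_{F_d}).\<close>
definition tuple_mset :: "nat \<Rightarrow> (nat \<Rightarrow> 'a set) \<Rightarrow> 'a set multiset" where
  "tuple_mset d F = image_mset F (mset_set {1..d})"

definition in_VP_support :: "'a set \<Rightarrow> ('a set \<Rightarrow> bool) \<Rightarrow> nat \<Rightarrow> 'a set multiset \<Rightarrow> bool" where
  "in_VP_support E indep d S \<longleftrightarrow> (\<exists>F. admissible_tuple E indep d F \<and> tuple_mset d F = S)"

end

theory Submission
  imports Defs
begin


lemma rk_fin: assumes "matroid E indep" shows "finite {card I | I. I \<subseteq> X \<and> indep I}"
proof -
  have sub: "\<forall>X. indep X \<longrightarrow> X \<subseteq> E" and fE: "finite E" using assms unfolding matroid_def by auto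
  have "{card I | I. I \<subseteq> X \<and> indep I} \<subseteq> card ` Pow E" using sub by auto
  moreover have "finite (card ` Pow E)" using fE by simp
  ultimately show ?thesis by (rule finite_subset)
qed

lemma rk_ex: assumes "matroid E indep" shows "\<exists>I. I \<subseteq> X \<and> indep I \<and> card I = mrank indep X"
proof -
  have "indep {}" using assms unfolding matroid_def by simp
  then have "\<exists>I. card ({}::'a set) = card I \<and> I \<subseteq> X \<and> indep I" by (intro exI[of _ "{}"]) simp
  then have "card ({}::'a set) \<in> {card I | I. I \<subseteq> X \<and> indep I}" by (simp only: mem_Collect_eq)
  then have ne: "{card I | I. I \<subseteq> X \<and> indep I} \<noteq> {}" by auto
  have "mrank indep X \<in> {card I | I. I \<subseteq> X \<and> indep I}"
    unfolding mrank_def by (rule Max_in[OF rk_fin[OF assms] ne])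
  then show ?thesis by auto
qed

lemma rk_ge: assumes "matroid E indep" "I \<subseteq> X" "indep I" shows "card I \<le> mrank indep X"
proof -
  have "card I \<in> {card I | I. I \<subseteq> X \<and> indep I}" using assms by blast
  then show ?thesis unfolding mrank_def by (rule Max_ge[OF rk_fin[OF assms(1)]])
qed

lemma rk_mono: assumes "matroid E indep" "X \<subseteq> Y" shows "mrank indep X \<le> mrank indep Y"
proof -
  obtain I where "I \<subseteq> X" "indep I" "card I = mrank indep X" using rk_ex[OF assms(1)] by blast
  then show ?thesis using rk_ge[OF assms(1), of I Y] assms(2) by simp
qed

lemma rk_empty: assumes "matroid E indep" shows "mrank indep {} = 0"
  using rk_ex[OF assms, of "{}"] by auto

lemma ind_fin: assumes "matroid E indep" "indep I" shows "finite I"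
proof -
  have "I \<subseteq> E" "finite E" using assms unfolding matroid_def by blast+
  then show ?thesis by (rule finite_subset)
qed

lemma ind_sub: assumes "matroid E indep" "indep I" "J \<subseteq> I" shows "indep J"
  using assms unfolding matroid_def by blast

lemma rk_extend: assumes m: "matroid E indep"
  shows "indep I \<Longrightarrow> I \<subseteq> Z \<Longrightarrow> \<exists>J. I \<subseteq> J \<and> J \<subseteq> Z \<and> indep J \<and> card J = mrank indep Z"
proof (induction "mrank indep Z - card I" arbitrary: I rule: less_induct)
  case less
  have fin: "finite I" using ind_fin[OF m less.prems(1)] .
  have le: "card I \<le> mrank indep Z" using rk_ge[OF m less.prems(2) less.prems(1)] .
  show ?case
  proof (cases "card I = mrank indep Z")
    case True then show ?thesis using less by blast
  next
    case False
    then have lt: "card I < mrank indep Z" using le by simp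
    obtain K where K: "K \<subseteq> Z" "indep K" "card K = mrank indep Z" using rk_ex[OF m] by blast
    have aug: "\<forall>X Y. indep X \<and> indep Y \<and> card X < card Y \<longrightarrow> (\<exists>y\<in>Y - X. indep (insert y X))"
      using m unfolding matroid_def by blast
    have pre: "indep I \<and> indep K \<and> card I < card K" using less.prems(1) K lt by simp
    obtain y where y: "y \<in> K - I" "indep (insert y I)"
      using aug pre by blast
    have c: "card (insert y I) = card I + 1" using fin y by simp
    have "mrank indep Z - card (insert y I) < mrank indep Z - card I" using c lt by simp
    have sub: "insert y I \<subseteq> Z" using y K less.prems by blast
    have "\<exists>J. insert y I \<subseteq> J \<and> J \<subseteq> Z \<and> indep J \<and> card J = mrank indep Z"
      by (rule less.hyps) (fact+)
    then show ?thesis by blast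
  qed
qed

lemma rk_submod: assumes m: "matroid E indep"
  shows "mrank indep (X \<union> Y) + mrank indep (X \<inter> Y) \<le> mrank indep X + mrank indep Y"
proof -
  obtain I where I: "I \<subseteq> X \<inter> Y" "indep I" "card I = mrank indep (X \<inter> Y)"
    using rk_ex[OF m, of "X \<inter> Y"] by (elim exE conjE)
  have "I \<subseteq> X \<union> Y" using I(1) by auto
  obtain J where J: "I \<subseteq> J" "J \<subseteq> X \<union> Y" "indep J" "card J = mrank indep (X \<union> Y)"
    using rk_extend[OF m I(2) \<open>I \<subseteq> X \<union> Y\<close>] by (elim exE conjE)
  have fJ: "finite J" using ind_fin[OF m J(3)] .
  have iX: "indep (J \<inter> X)" using ind_sub[OF m J(3)] by simp
  have iY: "indep (J \<inter> Y)" using ind_sub[OF m J(3)] by simp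
  have "card (J \<inter> X) \<le> mrank indep X" using rk_ge[OF m _ iX] by simp
  moreover have "card (J \<inter> Y) \<le> mrank indep Y" using rk_ge[OF m _ iY] by simp
  moreover have "(J \<inter> X) \<union> (J \<inter> Y) = J" using J(2) by auto
  then have "card (J \<inter> X) + card (J \<inter> Y) = card J + card ((J \<inter> X) \<inter> (J \<inter> Y))"
    using card_Un_Int[of "J \<inter> X" "J \<inter> Y"] fJ by simp
  moreover have "card I \<le> card ((J \<inter> X) \<inter> (J \<inter> Y))"
    using I(1) J(1) fJ by (intro card_mono) auto
  ultimately show ?thesis using I J by linarith
qed



lemma tm_size: "size (tuple_mset d F) = d"
  unfolding tuple_mset_def by simp

lemma tm_set: "set_mset (tuple_mset d F) = F ` {1..d}"
  unfolding tuple_mset_def by simp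

lemma tm_count_sub: assumes "J \<subseteq> {1..d}"
  shows "count (image_mset F (mset_set J)) A \<le> count (tuple_mset d F) A"
proof -
  have "mset_set J \<subseteq># mset_set {1..d}" using assms by (intro subset_imp_msubset_mset_set) auto
  then have "image_mset F (mset_set J) \<subseteq># tuple_mset d F"
    unfolding tuple_mset_def by (rule image_mset_subseteq_mono)
  then show ?thesis by (simp add: subseteq_mset_def)
qed

theorem proposition5p15:
  fixes E :: "'a set" and indep :: "'a set \<Rightarrow> bool" and d :: nat
    and F G :: "nat \<Rightarrow> 'a set"
  assumes "matroid E indep" and "loopless E indep" and "mrank indep E = d + 1"
    and "\<forall>j\<in>{1..d}. is_flat E indep (F j) \<and> mrank indep (F j) \<ge> 2"
    and "\<forall>j\<in>{1..d}. is_flat E indep (G j) \<and> mrank indep (G j) \<ge> 2"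
    and "in_VP_support E indep d (tuple_mset d F)"
    and "in_VP_support E indep d (tuple_mset d G)"
    and "count (tuple_mset d G) (G d) > count (tuple_mset d F) (G d)"
  shows "\<exists>m\<in>{1..d}. count (tuple_mset d F) (F m) > count (tuple_mset d G) (F m) \<and>
           in_VP_support E indep d (tuple_mset d F - {#F m#} + {#G d#})"
proof -
  have mat: "matroid E indep" by fact
  from assms(6) obtain F' where F': "admissible_tuple E indep d F'" "tuple_mset d F' = tuple_mset d F"
    unfolding in_VP_support_def by blast
  from assms(7) obtain G' where G': "admissible_tuple E indep d G'" "tuple_mset d G' = tuple_mset d G"
    unfolding in_VP_support_def by blast
  define g where "g = G d"
  have d1: "d \<ge> 1"
  proof (rule ccontr)
    assume "\<not> d \<ge> 1"
    then have "d = 0" by simp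
    then have "tuple_mset d G = {#}" unfolding tuple_mset_def by simp
    then show False using assms(8) by simp
  qed
  have gflat: "is_flat E indep g" and grk: "mrank indep g \<ge> 2" using assms(5) d1 g_def by auto
  have cnt: "count (tuple_mset d F') g < count (tuple_mset d G') g" using assms(8) F'(2) G'(2) g_def by simp
  have F'flat: "\<forall>j\<in>{1..d}. is_flat E indep (F' j) \<and> F' j \<noteq> {}"
    and F'rk: "\<forall>J. J \<subseteq> {1..d} \<and> J \<noteq> {} \<longrightarrow> mrank indep (\<Union>(F' ` J)) \<ge> card J + 1"
    using F'(1) unfolding admissible_tuple_def by auto
  have G'rk: "\<forall>J. J \<subseteq> {1..d} \<and> J \<noteq> {} \<longrightarrow> mrank indep (\<Union>(G' ` J)) \<ge> card J + 1"
    using G'(1) unfolding admissible_tuple_def by auto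
  define gr where "gr K = mrank indep (g \<union> \<Union>(F' ` K))" for K
  define bad where "bad K \<longleftrightarrow> K \<subseteq> {1..d} \<and> K \<noteq> {} \<and> gr K \<le> card K + 1" for K
  have key: "\<exists>m\<in>{1..d}. count (tuple_mset d F') (F' m) > count (tuple_mset d G') (F' m) \<and> (\<forall>K. bad K \<longrightarrow> m \<in> K)"
  proof (cases "\<exists>K. bad K")
    case False
    have "\<exists>A. count (tuple_mset d F') A > count (tuple_mset d G') A"
    proof (rule ccontr)
      assume "\<not> (\<exists>A. count (tuple_mset d F') A > count (tuple_mset d G') A)"
      then have "tuple_mset d F' \<subseteq># tuple_mset d G'" by (simp add: subseteq_mset_def not_less)
      moreover have "tuple_mset d F' \<noteq> tuple_mset d G'" using cnt by auto
      ultimately have "tuple_mset d F' \<subset># tuple_mset d G'" by (simp add: subset_mset.less_le)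
      then have "size (tuple_mset d F') < size (tuple_mset d G')" by (rule mset_subset_size)
      then show False by (simp add: tm_size)
    qed
    then obtain A where A: "count (tuple_mset d F') A > count (tuple_mset d G') A" by blast
    then have "0 < count (tuple_mset d F') A" by linarith
    then have "A \<in># tuple_mset d F'" by (simp only: count_greater_zero_iff)
    then obtain m where "m \<in> {1..d}" "A = F' m" by (auto simp: tm_set)
    then show ?thesis using A False by blast
  next
    case True
    then obtain B where B: "bad B" "\<forall>K. bad K \<longrightarrow> card B \<le> card K"
      using ex_has_least_nat[of bad _ card] by blast
    have Bd: "B \<subseteq> {1..d}" "B \<noteq> {}" "gr B \<le> card B + 1" using B(1) bad_def by auto
    have finB: "finite B" using Bd(1) finite_subset by blast
    have Bsub: "\<forall>K. bad K \<longrightarrow> B \<subseteq> K"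
    proof (intro allI impI)
      fix K assume K: "bad K"
      have Kd: "K \<subseteq> {1..d}" "K \<noteq> {}" "gr K \<le> card K + 1" using K bad_def by auto
      have finK: "finite K" using Kd(1) finite_subset by blast
      let ?X = "g \<union> \<Union>(F'`B)" let ?Y = "g \<union> \<Union>(F'`K)"
      have sm: "mrank indep (?X \<union> ?Y) + mrank indep (?X \<inter> ?Y) \<le> mrank indep ?X + mrank indep ?Y"
        by (rule rk_submod[OF mat])
      have u: "?X \<union> ?Y = g \<union> \<Union>(F'`(B\<union>K))" by auto
      have i: "g \<union> \<Union>(F'`(B\<inter>K)) \<subseteq> ?X \<inter> ?Y" by auto
      have BK: "B \<union> K \<subseteq> {1..d}" "B \<union> K \<noteq> {}" using Bd Kd by auto
      have r1: "card (B\<union>K) + 1 \<le> mrank indep (\<Union>(F'`(B\<union>K)))" using F'rk BK by blast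
      have r2: "mrank indep (\<Union>(F'`(B\<union>K))) \<le> mrank indep (?X \<union> ?Y)" unfolding u
        by (rule rk_mono[OF mat]) auto
      have cards: "card (B\<union>K) + card (B\<inter>K) = card B + card K" using card_Un_Int finB finK by metis
      have gB: "mrank indep ?X \<le> card B + 1" "mrank indep ?Y \<le> card K + 1" using Bd(3) Kd(3) unfolding gr_def by auto
      show "B \<subseteq> K"
      proof (cases "B \<inter> K = {}")
        case True
        have "mrank indep g \<le> mrank indep (?X \<inter> ?Y)" by (rule rk_mono[OF mat]) auto
        moreover have "card (B \<inter> K) = 0" using True by simp
        ultimately have False using sm r1 r2 cards gB grk by linarith
        then show ?thesis by simp
      next
        case False
        have "gr (B\<inter>K) \<le> mrank indep (?X \<inter> ?Y)" unfolding gr_def by (rule rk_mono[OF mat i])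
        then have "gr (B\<inter>K) \<le> card (B\<inter>K) + 1" using sm r1 r2 cards gB by linarith
        then have "bad (B\<inter>K)" using False Bd unfolding bad_def by auto
        then have "card B \<le> card (B\<inter>K)" using B(2) by blast
        then have "B \<inter> K = B" using card_seteq[OF finB, of "B \<inter> K"] by auto
        then show ?thesis by blast
      qed
    qed
    have "\<exists>m\<in>B. count (tuple_mset d F') (F' m) > count (tuple_mset d G') (F' m)"
    proof (rule ccontr)
      assume "\<not> (\<exists>m\<in>B. count (tuple_mset d F') (F' m) > count (tuple_mset d G') (F' m))"
      then have le: "\<forall>m\<in>B. count (tuple_mset d F') (F' m) \<le> count (tuple_mset d G') (F' m)"
        by (simp add: not_less)
      define Y where "Y = g \<union> \<Union>(F'`B)"
      define P where "P = image_mset F' (mset_set B) + {#g#}"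
      have sizeP: "size P = card B + 1" by (simp add: P_def)
      have subc: "\<And>A. count (image_mset F' (mset_set B)) A \<le> count (tuple_mset d F') A"
        using tm_count_sub[OF Bd(1)] by blast
      have PY: "P \<subseteq># filter_mset (\<lambda>A. A \<subseteq> Y) (tuple_mset d G')"
        unfolding subseteq_mset_def
      proof (intro allI)
        fix A
        show "count P A \<le> count (filter_mset (\<lambda>A. A \<subseteq> Y) (tuple_mset d G')) A"
        proof (cases "A \<in># P")
          case False then show ?thesis by (simp add: not_in_iff)
        next
          case True
          then have AY: "A \<subseteq> Y" using finB by (auto simp: P_def Y_def)
          have "count P A \<le> count (tuple_mset d G') A"
          proof (cases "A = g")
            case True
            then show ?thesis using subc[of g] cnt by (simp add: P_def)
          next
            case False
            then have "A \<in># image_mset F' (mset_set B)" using \<open>A \<in># P\<close> by (simp add: P_def)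
            then obtain i where "i \<in> B" "A = F' i" using finB by auto
            then have "count (tuple_mset d F') A \<le> count (tuple_mset d G') A" using le by blast
            then show ?thesis using subc[of A] False by (simp add: P_def)
          qed
          then show ?thesis using AY by simp
        qed
      qed
      define J where "J = {j\<in>{1..d}. G' j \<subseteq> Y}"
      have "filter_mset (\<lambda>A. A \<subseteq> Y) (tuple_mset d G') = image_mset G' (mset_set J)"
        unfolding tuple_mset_def J_def by (simp add: filter_mset_image_mset filter_mset_mset_set)
      then have "size P \<le> card J" using size_mset_mono[OF PY] by simp
      then have cJ: "card J \<ge> card B + 1" using sizeP by simp
      have Jd1: "J \<subseteq> {1..d}" unfolding J_def by auto
      have Jd2: "J \<noteq> {}"
      proof
        assume "J = {}" then show False using cJ by simp
      qed
      note Jd = Jd1 Jd2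
      then have "card J + 1 \<le> mrank indep (\<Union>(G'`J))" using G'rk by blast
      moreover have "mrank indep (\<Union>(G'`J)) \<le> mrank indep Y" by (rule rk_mono[OF mat]) (auto simp: J_def)
      moreover have "mrank indep Y \<le> card B + 1" using Bd(3) unfolding gr_def Y_def .
      ultimately show False using cJ by linarith
    qed
    then obtain m where "m \<in> B" "count (tuple_mset d F') (F' m) > count (tuple_mset d G') (F' m)" by blast
    then show ?thesis using Bsub Bd(1) by blast
  qed
  then obtain m where m: "m\<in>{1..d}" "count (tuple_mset d F') (F' m) > count (tuple_mset d G') (F' m)"
    "\<forall>K. bad K \<longrightarrow> m\<in>K" by blast
  define H where "H = F'(m := g)"
  have Hm: "tuple_mset d H = tuple_mset d F' - {#F' m#} + {#g#}"
  proof -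
    have e: "mset_set {1..d} = add_mset m (mset_set ({1..d} - {m}))" using m(1) by (simp add: mset_set.remove)
    have "image_mset H (mset_set ({1..d}-{m})) = image_mset F' (mset_set ({1..d}-{m}))"
      by (rule image_mset_cong) (simp add: H_def)
    then show ?thesis unfolding tuple_mset_def e by (simp add: H_def)
  qed
  have gne: "g \<noteq> {}"
  proof
    assume "g = {}"
    then have "mrank indep g = 0" using rk_empty[OF mat] by simp
    then show False using grk by simp
  qed
  have Hadm: "admissible_tuple E indep d H"
    unfolding admissible_tuple_def
  proof (intro conjI)
    show "\<forall>j\<in>{1..d}. is_flat E indep (H j) \<and> H j \<noteq> {}"
      using F'flat gflat gne by (auto simp: H_def)
  next
    show "\<forall>J. J \<subseteq> {1..d} \<and> J \<noteq> {} \<longrightarrow> card J + 1 \<le> mrank indep (\<Union>(H`J))"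
    proof (intro allI impI)
    fix J assume J: "J \<subseteq> {1..d} \<and> J \<noteq> {}"
    have finJ: "finite J" using J finite_subset by blast
    show "card J + 1 \<le> mrank indep (\<Union>(H`J))"
    proof (cases "m \<in> J")
      case False
      then have "H ` J = F' ` J" by (auto simp: H_def)
      then show ?thesis using F'rk[rule_format, OF J] by simp
    next
      case True
      define K where "K = J - {m}"
      have U: "\<Union>(H`J) = g \<union> \<Union>(F'`K)" using True by (auto simp: H_def K_def)
      have cK: "card J = card K + 1" using card.remove[OF finJ True] unfolding K_def by simp
      show ?thesis
      proof (cases "K = {}")
        case True
        then show ?thesis using U cK grk by simp
      next
        case False
        have "m \<notin> K" by (simp add: K_def)
        then have "\<not> bad K" using m(3) by blast
        moreover have "K \<subseteq> {1..d}" using J by (auto simp: K_def)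
        ultimately have "gr K > card K + 1" using False unfolding bad_def by auto
        then show ?thesis using U cK unfolding gr_def by simp
      qed
    qed
    qed
  qed
  have "F' m \<in># tuple_mset d F" using F'(2)[symmetric] m(1) by (simp add: tm_set)
  then obtain m' where m': "m' \<in> {1..d}" "F m' = F' m" by (auto simp: tm_set)
  have "tuple_mset d H = tuple_mset d F - {#F m'#} + {#G d#}" using Hm F'(2) m'(2) g_def by simp
  then have "in_VP_support E indep d (tuple_mset d F - {#F m'#} + {#G d#})"
    unfolding in_VP_support_def using Hadm by blast
  moreover have "count (tuple_mset d F) (F m') > count (tuple_mset d G) (F m')"
    using m(2) F'(2) G'(2) m'(2) by simp
  ultimately show ?thesis using m'(1) by blast
qed

end
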